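(* Let $G$ be an infinite connected simple undirected graph with vertex degrees bounded by $v<\infty$ and internal scaling dimension $D$ (i.e. $D_S(x)=D$ for all vertices $x$). Fix an integer $l_0\ge 1$ and let $\hat G_{cl}$ be the purified clique graph with overlap threshold $l_0$. Then for every clique $C$ of $G$ the upper internal scaling dimension of $\hat G_{cl}$ at $C$ satisfies $\overline{D}_S^{\hat G_{cl}}(C)\le D$.
   Context: Graphs are simple and undirected with graph metric $d$. For a vertex $x$ of a graph $H$, $U_n(x)$ is the ball of radius $n$ in $H$, $D_n(x)=\ln(\#U_n(x))/\ln n$, $\underline D_S(x)=\liminf_n D_n(x)$, $\overline D_S(x)=\limsup_n D_n(x)$; if these agree the value is $D_S(x)$, and $H$ has internal scaling dimension $D$ if $D_S(x)=D$ for all $x$. A clique of $G$ is a maximal complete subgraph. The purified clique graph $\hat G_{cl}$ with threshold $l_0$ has the cliques of $G$ as vertices, two distinct cliques $C,C'$ being adjacent iff $\#(C\cap C')\ge l_0$. *)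

theory Defs
  imports "HOL-Analysis.Analysis"
begin

definition simple_graph :: "'a set \<Rightarrow> ('a \<Rightarrow> 'a \<Rightarrow> bool) \<Rightarrow> bool" where
  "simple_graph V E \<longleftrightarrow> (\<forall>x y. E x y \<longrightarrow> x \<in> V \<and> y \<in> V \<and> x \<noteq> y \<and> E y x)"

inductive walk :: "('a \<Rightarrow> 'a \<Rightarrow> bool) \<Rightarrow> 'a \<Rightarrow> 'a \<Rightarrow> nat \<Rightarrow> bool" for E where
  walk_refl: "walk E x x 0"
| walk_step: "E x y \<Longrightarrow> walk E y z n \<Longrightarrow> walk E x z (Suc n)"

definition connected_graph :: "'a set \<Rightarrow> ('a \<Rightarrow> 'a \<Rightarrow> bool) \<Rightarrow> bool" where
  "connected_graph V E \<longleftrightarrow> (\<forall>x\<in>V. \<forall>y\<in>V. \<exists>n. walk E x y n)"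

definition degree :: "('a \<Rightarrow> 'a \<Rightarrow> bool) \<Rightarrow> 'a \<Rightarrow> nat" where
  "degree E x = card {y. E x y}"

definition degree_bounded :: "'a set \<Rightarrow> ('a \<Rightarrow> 'a \<Rightarrow> bool) \<Rightarrow> nat \<Rightarrow> bool" where
  "degree_bounded V E v \<longleftrightarrow> (\<forall>x\<in>V. finite {y. E x y} \<and> degree E x \<le> v)"

definition ball_graph :: "'a set \<Rightarrow> ('a \<Rightarrow> 'a \<Rightarrow> bool) \<Rightarrow> 'a \<Rightarrow> nat \<Rightarrow> 'a set" where
  "ball_graph V E x n = {y\<in>V. \<exists>k\<le>n. walk E x y k}"

definition D_n :: "'a set \<Rightarrow> ('a \<Rightarrow> 'a \<Rightarrow> bool) \<Rightarrow> 'a \<Rightarrow> nat \<Rightarrow> real" where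
  "D_n V E x n = ln (real (card (ball_graph V E x n))) / ln (real n)"

definition upper_dim :: "'a set \<Rightarrow> ('a \<Rightarrow> 'a \<Rightarrow> bool) \<Rightarrow> 'a \<Rightarrow> ereal" where
  "upper_dim V E x = limsup (\<lambda>n. ereal (D_n V E x n))"

definition lower_dim :: "'a set \<Rightarrow> ('a \<Rightarrow> 'a \<Rightarrow> bool) \<Rightarrow> 'a \<Rightarrow> ereal" where
  "lower_dim V E x = liminf (\<lambda>n. ereal (D_n V E x n))"

definition has_internal_scaling_dim :: "'a set \<Rightarrow> ('a \<Rightarrow> 'a \<Rightarrow> bool) \<Rightarrow> ereal \<Rightarrow> bool" where
  "has_internal_scaling_dim V E D \<longleftrightarrow> (\<forall>x\<in>V. lower_dim V E x = D \<and> upper_dim V E x = D)"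

definition complete_sub :: "('a \<Rightarrow> 'a \<Rightarrow> bool) \<Rightarrow> 'a set \<Rightarrow> bool" where
  "complete_sub E C \<longleftrightarrow> (\<forall>x\<in>C. \<forall>y\<in>C. x \<noteq> y \<longrightarrow> E x y)"

definition is_clique :: "'a set \<Rightarrow> ('a \<Rightarrow> 'a \<Rightarrow> bool) \<Rightarrow> 'a set \<Rightarrow> bool" where
  "is_clique V E C \<longleftrightarrow> C \<subseteq> V \<and> complete_sub E C \<and>
     (\<forall>C'. C \<subseteq> C' \<and> C' \<subseteq> V \<and> complete_sub E C' \<longrightarrow> C' = C)"

definition clique_vertices :: "'a set \<Rightarrow> ('a \<Rightarrow> 'a \<Rightarrow> bool) \<Rightarrow> 'a set set" where
  "clique_vertices V E = {C. is_clique V E C}"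

definition purified_clique_edge :: "'a set \<Rightarrow> ('a \<Rightarrow> 'a \<Rightarrow> bool) \<Rightarrow> nat \<Rightarrow> 'a set \<Rightarrow> 'a set \<Rightarrow> bool" where
  "purified_clique_edge V E l0 C C' \<longleftrightarrow>
     is_clique V E C \<and> is_clique V E C' \<and> C \<noteq> C' \<and> card (C \<inter> C') \<ge> l0"

end

theory Submission imports Defs "HOL-Real_Asymp.Real_Asymp" begin

lemma walk_snoc_inv: "walk E x z (Suc n) \<Longrightarrow> \<exists>y. walk E x y n \<and> E y z"
proof (induction n arbitrary: x)
  case 0
  then show ?case by (auto elim: walk.cases intro: walk.intros)
next
  case (Suc n)
  from Suc.prems obtain y where "E x y" "walk E y z (Suc n)" by (auto elim: walk.cases)
  with Suc.IH obtain w where "walk E y w n" "E w z" by blast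
  then show ?case using \<open>E x y\<close> walk_step by metis
qed

lemma walk_in_V: "walk E x y k \<Longrightarrow> simple_graph V E \<Longrightarrow> x \<in> V \<Longrightarrow> y \<in> V"
  by (induction rule: walk.induct) (auto simp: simple_graph_def)

lemma walk_set_finite:
  assumes "simple_graph V E" "degree_bounded V E v" "x \<in> V"
  shows "finite {y. walk E x y k}"
proof (induction k)
  case 0
  have "{y. walk E x y 0} = {x}" by (auto elim: walk.cases intro: walk.intros)
  then show ?case by simp
next
  case (Suc k)
  have "{y. walk E x y (Suc k)} \<subseteq> (\<Union>w\<in>{y. walk E x y k}. {z. E w z})"
    using walk_snoc_inv by fastforce
  moreover have "finite (\<Union>w\<in>{y. walk E x y k}. {z. E w z})"
  proof (rule finite_UN_I[OF Suc.IH])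
    fix w assume "w \<in> {y. walk E x y k}"
    hence "w \<in> V" using walk_in_V[OF _ assms(1) assms(3)] by blast
    thus "finite {z. E w z}" using assms(2) unfolding degree_bounded_def by blast
  qed
  ultimately show ?case by (rule finite_subset)
qed

lemma ball_finite:
  assumes "simple_graph V E" "degree_bounded V E v" "x \<in> V"
  shows "finite (ball_graph V E x n)"
proof -
  have "ball_graph V E x n \<subseteq> (\<Union>k\<le>n. {y. walk E x y k})" unfolding ball_graph_def by auto
  thus ?thesis using walk_set_finite[OF assms] by (meson finite_UN_I finite_atMost finite_subset)
qed

lemma clique_walk:
  assumes "walk (purified_clique_edge V E l0) C C' k" "l0 \<ge> 1"
  shows "\<forall>x\<in>C. \<exists>y\<in>C'. \<exists>j\<le>k. walk E x y j"
  using assms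
proof (induction rule: walk.induct)
  case (walk_refl C)
  then show ?case by (auto intro: walk.intros)
next
  case (walk_step C1 C2 C3 n)
  show ?case
  proof
    fix x assume x: "x \<in> C1"
    have "card (C1 \<inter> C2) \<ge> 1" using walk_step unfolding purified_clique_edge_def by auto
    then obtain z where z: "z \<in> C1" "z \<in> C2" by (metis Int_iff all_not_in_conv card.empty not_one_le_zero)
    show "\<exists>y\<in>C3. \<exists>j\<le>Suc n. walk E x y j"
    proof (cases "z = x")
      case True
      then show ?thesis using walk_step z by (meson le_SucI)
    next
      case False
      have "E x z" using walk_step(1) x z False
        unfolding purified_clique_edge_def is_clique_def complete_sub_def by auto
      moreover obtain y j where "y \<in> C3" "j \<le> n" "walk E z y j" using walk_step z by blast
      ultimately show ?thesis by (meson Suc_le_mono walk.walk_step)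
    qed
  qed
qed

lemma clique_nonempty:
  assumes "is_clique V E C" "V \<noteq> {}"
  shows "C \<noteq> {}"
proof
  assume "C = {}"
  obtain x where "x \<in> V" using assms by auto
  moreover have "\<forall>C'. C \<subseteq> C' \<and> C' \<subseteq> V \<and> complete_sub E C' \<longrightarrow> C' = C"
    using assms(1) unfolding is_clique_def by blast
  moreover have "complete_sub E {x}" unfolding complete_sub_def by simp
  ultimately have "{x} = C" using \<open>C = {}\<close> by blast
  thus False using \<open>C = {}\<close> by auto
qed

lemma clique_ball_bound:
  assumes sg: "simple_graph V E" and db: "degree_bounded V E v" and l0: "l0 \<ge> 1"
    and C: "is_clique V E C" and x: "x \<in> C"
  shows "finite (ball_graph (clique_vertices V E) (purified_clique_edge V E l0) C n) \<and>
     card (ball_graph (clique_vertices V E) (purified_clique_edge V E l0) C n)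
       \<le> 2^(v+1) * card (ball_graph V E x n)"
proof -
  let ?S = "ball_graph (clique_vertices V E) (purified_clique_edge V E l0) C n"
  let ?U = "ball_graph V E x n"
  have xV: "x \<in> V" using C x unfolding is_clique_def by auto
  have fU: "finite ?U" using ball_finite[OF sg db xV] .
  have sub: "?S \<subseteq> (\<Union>y\<in>?U. Pow (insert y {z. E y z}))"
  proof
    fix C' assume "C' \<in> ?S"
    then obtain k where k: "k \<le> n" "walk (purified_clique_edge V E l0) C C' k" "is_clique V E C'"
      unfolding ball_graph_def clique_vertices_def by auto
    then obtain y j where y: "y \<in> C'" "j \<le> k" "walk E x y j" using clique_walk[OF k(2) l0] x by blast
    have "j \<le> n" using y(2) k(1) by simp
    have "y \<in> V" using walk_in_V[OF y(3) sg xV] .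
    hence "y \<in> ?U" using \<open>j \<le> n\<close> y(3) unfolding ball_graph_def by blast
    moreover have "C' \<subseteq> insert y {z. E y z}" using k(3) y(1)
      unfolding is_clique_def complete_sub_def by auto
    ultimately show "C' \<in> (\<Union>y\<in>?U. Pow (insert y {z. E y z}))" by auto
  qed
  have fin_each: "\<And>y. y \<in> ?U \<Longrightarrow> finite (insert y {z. E y z}) \<and> card (insert y {z. E y z}) \<le> v + 1"
  proof -
    fix y assume "y \<in> ?U"
    hence "y \<in> V" unfolding ball_graph_def by auto
    hence "finite {z. E y z}" "card {z. E y z} \<le> v" using db unfolding degree_bounded_def degree_def by auto
    moreover have "card (insert y {z. E y z}) \<le> card {z. E y z} + 1"
      by (metis Suc_eq_plus1 card_insert_if \<open>finite {z. E y z}\<close> le_SucI order_refl)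
    ultimately show "finite (insert y {z. E y z}) \<and> card (insert y {z. E y z}) \<le> v + 1"
      by simp
  qed
  have fin: "finite (\<Union>y\<in>?U. Pow (insert y {z. E y z}))" using fU fin_each by auto
  have "card ?S \<le> card (\<Union>y\<in>?U. Pow (insert y {z. E y z}))" using card_mono[OF fin sub] .
  also have "\<dots> \<le> (\<Sum>y\<in>?U. card (Pow (insert y {z. E y z})))" using card_UN_le[OF fU] by blast
  also have "\<dots> \<le> (\<Sum>y\<in>?U. 2^(v+1))"
  proof (rule sum_mono)
    fix y assume "y \<in> ?U"
    hence "card (insert y {z. E y z}) \<le> v+1" using fin_each by blast
    hence "(2::nat) ^ card (insert y {z. E y z}) \<le> 2^(v+1)" by (rule power_increasing) simp
    thus "card (Pow (insert y {z. E y z})) \<le> 2^(v+1)" using fin_each \<open>y \<in> ?U\<close> card_Pow by metis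
  qed
  also have "\<dots> = 2^(v+1) * card ?U" by simp
  finally show ?thesis using finite_subset[OF sub fin] by simp
qed

theorem mainTheorem5:
  fixes V :: "'a set" and E :: "'a \<Rightarrow> 'a \<Rightarrow> bool" and v l0 :: nat and D :: ereal and C :: "'a set"
  assumes "simple_graph V E"
    and "infinite V"
    and "connected_graph V E"
    and "degree_bounded V E v"
    and "has_internal_scaling_dim V E D"
    and "l0 \<ge> 1"
    and "is_clique V E C"
  shows "upper_dim (clique_vertices V E) (purified_clique_edge V E l0) C \<le> D"
proof -
  have "V \<noteq> {}" using assms(2) by auto
  then obtain x where x: "x \<in> C" using clique_nonempty[OF assms(7)] by blast
  have xV: "x \<in> V" using x assms(7) unfolding is_clique_def by auto
  have D: "D = upper_dim V E x" using assms(5) xV unfolding has_internal_scaling_dim_def by auto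
  define K :: real where "K = 2^(v+1)"
  have Kpos: "K > 0" unfolding K_def by simp
  have bound: "D_n (clique_vertices V E) (purified_clique_edge V E l0) C n
      \<le> ln K / ln (real n) + D_n V E x n" if n: "n \<ge> 2" for n
  proof -
    let ?S = "ball_graph (clique_vertices V E) (purified_clique_edge V E l0) C n"
    let ?U = "ball_graph V E x n"
    have b: "finite ?S" "card ?S \<le> 2^(v+1) * card ?U"
      using clique_ball_bound[OF assms(1) assms(4) assms(6) assms(7) x] by auto
    have "C \<in> ?S" using assms(7) unfolding ball_graph_def clique_vertices_def
      by (auto intro: walk.intros)
    hence s1: "card ?S \<ge> 1" using b(1) by (metis One_nat_def Suc_leI card_gt_0_iff empty_iff)
    have "x \<in> ?U" using xV unfolding ball_graph_def by (auto intro: walk.intros)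
    hence u1: "card ?U \<ge> 1" using ball_finite[OF assms(1) assms(4) xV]
      by (metis One_nat_def Suc_leI card_gt_0_iff empty_iff)
    have "real (card ?S) \<le> K * real (card ?U)" unfolding K_def using b(2)
      by (metis of_nat_le_iff of_nat_mult of_nat_numeral of_nat_power)
    hence "ln (real (card ?S)) \<le> ln (K * real (card ?U))" using s1 by simp
    also have "\<dots> = ln K + ln (real (card ?U))" using Kpos u1 by (simp add: ln_mult)
    finally have le: "ln (real (card ?S)) \<le> ln K + ln (real (card ?U))" .
    have lnpos: "ln (real n) > 0" using n by simp
    have "ln (real (card ?S)) / ln (real n) \<le> (ln K + ln (real (card ?U))) / ln (real n)"
      using le lnpos by (simp add: divide_right_mono)
    thus ?thesis unfolding D_n_def by (simp add: add_divide_distrib)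
  qed
  have lim0: "(\<lambda>n::nat. ereal (ln K / ln (real n))) \<longlonglongrightarrow> 0"
  proof -
    have "(\<lambda>n::nat. ln K / ln (real n)) \<longlonglongrightarrow> 0" by real_asymp
    thus ?thesis using tendsto_ereal zero_ereal_def by metis
  qed
  have "upper_dim (clique_vertices V E) (purified_clique_edge V E l0) C
     \<le> limsup (\<lambda>n. ereal (ln K / ln (real n)) + ereal (D_n V E x n))"
    unfolding upper_dim_def
  proof (rule Limsup_mono)
    show "\<forall>\<^sub>F n in sequentially. ereal (D_n (clique_vertices V E) (purified_clique_edge V E l0) C n)
       \<le> ereal (ln K / ln (real n)) + ereal (D_n V E x n)"
      using bound by (auto intro!: eventually_sequentiallyI[of 2])
  qed
  also have "\<dots> = 0 + limsup (\<lambda>n. ereal (D_n V E x n))"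
    by (rule ereal_limsup_lim_add[OF lim0]) simp
  also have "\<dots> = D" using D unfolding upper_dim_def by simp
  finally show ?thesis .
qed

end
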